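(* Let $\mathcal{DP}^*_1$ be the digraph with vertex set $\{1,2\}$ and edge set $\{(1,1),(1,2),(2,2)\}$. For every positive integer $m$ there is a surjective homomorphism from $(\mathcal{DP}^*_1)^\omega$ to the digraph $(\{1,\dots,m\};\leq)$.
   Context: $(\mathcal{DP}^*_1)^\omega$ is the direct power of countably many copies of $\mathcal{DP}^*_1$: vertices are sequences in $\{1,2\}^\omega$, with an edge from $u$ to $v$ iff $(u_i,v_i)$ is an edge of $\mathcal{DP}^*_1$ for every $i$. The digraph $(\{1,\dots,m\};\leq)$ has an edge from $a$ to $b$ iff $a\leq b$. *)

theory Defs
  imports Main
begin

definition DP1_verts :: "nat set" where
  "DP1_verts = {1, 2}"

definition DP1_edge :: "nat \<Rightarrow> nat \<Rightarrow> bool" where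
  "DP1_edge a b \<longleftrightarrow> (a, b) \<in> {(1,1), (1,2), (2,2)}"

definition DP1_omega_verts :: "(nat \<Rightarrow> nat) set" where
  "DP1_omega_verts = {u. \<forall>i. u i \<in> DP1_verts}"

definition DP1_omega_edge :: "(nat \<Rightarrow> nat) \<Rightarrow> (nat \<Rightarrow> nat) \<Rightarrow> bool" where
  "DP1_omega_edge u v \<longleftrightarrow> (\<forall>i. DP1_edge (u i) (v i))"

definition digraph_hom ::
  "'a set \<Rightarrow> ('a \<Rightarrow> 'a \<Rightarrow> bool) \<Rightarrow> 'b set \<Rightarrow> ('b \<Rightarrow> 'b \<Rightarrow> bool) \<Rightarrow> ('a \<Rightarrow> 'b) \<Rightarrow> bool" where
  "digraph_hom V E W F h \<longleftrightarrow>
     (\<forall>x\<in>V. h x \<in> W) \<and> (\<forall>x\<in>V. \<forall>y\<in>V. E x y \<longrightarrow> F (h x) (h y))"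

end

theory Submission
  imports Defs
begin

theorem mainTheorem7:
  fixes m :: nat
  assumes "m \<ge> 1"
  shows "\<exists>h. digraph_hom DP1_omega_verts DP1_omega_edge {1..m} (\<lambda>a b. a \<le> b) h
             \<and> h ` DP1_omega_verts = {1..m}"
proof -
  define h where "h = (\<lambda>u::nat\<Rightarrow>nat. 1 + card {i. i < m - 1 \<and> u i = 2})"
  have range: "h u \<in> {1..m}" for u
  proof -
    have "card {i. i < m - 1 \<and> u i = 2} \<le> card {..<m-1}"
      by (rule card_mono) auto
    then show ?thesis using assms by (simp add: h_def)
  qed
  have mono: "h u \<le> h v" if "DP1_omega_edge u v" for u v
  proof -
    have "{i. i < m - 1 \<and> u i = 2} \<subseteq> {i. i < m - 1 \<and> v i = 2}"
      proof (rule subsetI)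
      fix x assume "x \<in> {i. i < m - 1 \<and> u i = 2}"
      moreover have "DP1_edge (u x) (v x)" using that by (simp add: DP1_omega_edge_def)
      ultimately show "x \<in> {i. i < m - 1 \<and> v i = 2}" by (auto simp: DP1_edge_def)
    qed
    then have "card {i. i < m - 1 \<and> u i = 2} \<le> card {i. i < m - 1 \<and> v i = 2}"
      by (rule card_mono[rotated]) auto
    then show ?thesis by (simp add: h_def)
  qed
  have surj: "{1..m} \<subseteq> h ` DP1_omega_verts"
  proof
    fix k assume k: "k \<in> {1..m}"
    define u where "u = (\<lambda>i::nat. if i < k - 1 then 2 else (1::nat))"
    have "u \<in> DP1_omega_verts" by (simp add: u_def DP1_omega_verts_def DP1_verts_def)
    moreover have "{i. i < m - 1 \<and> u i = 2} = {..<k-1}" using k by (auto simp: u_def)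
    then have "h u = k" using k by (simp add: h_def)
    ultimately show "k \<in> h ` DP1_omega_verts" by force
  qed
  show ?thesis
    apply (rule exI[of _ h])
    using range mono surj by (auto simp: digraph_hom_def)
qed

end
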